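(* Let $L$ be a positive integer and let $(\mathbf{F},\mathbf{G})$ be an eigencomplementary pair of matrices $\mathbf{F},\mathbf{G}\in\mathbb{R}^{L\times L}$. Then: (1) if $\mathbf{F}$ is regular (invertible), then $\mathbf{F}^{-1}\mathbf{G}$ is negative semi-definite; (2) if $\mathbf{G}$ is regular, then $\mathbf{F}\mathbf{G}^{-1}$ is negative semi-definite.
   Context: A pair $(\mathbf{F},\mathbf{G})$ of real symmetric $L\times L$ matrices is called eigencomplementary if $\mathbf{F}$ is negative semi-definite, $\mathbf{G}$ is positive semi-definite, $\mathbf{F}$ and $\mathbf{G}$ have a common basis of eigenvectors of $\mathbb{R}^L$, and, in the case that $\mathbf{F}$ and $\mathbf{G}$ are both singular, additionally $\bigoplus_{\xi\in\sigma(\mathbf{F}),\,\xi<0}\operatorname{Eig}_{\mathbf{F}}(\xi)=\operatorname{Eig}_{\mathbf{G}}(0)$, where $\sigma(\cdot)$ denotes the spectrum and $\operatorname{Eig}_{\mathbf{M}}(\xi)$ the eigenspace of $\mathbf{M}$ for the eigenvalue $\xi$. *)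

theory Defs
  imports "HOL-Analysis.Analysis"
begin

text \<open>Real L x L matrices are rendered as real^'n^'n with L = CARD('n).\<close>

definition sym_mat :: "real^'n^'n \<Rightarrow> bool" where
  "sym_mat A \<longleftrightarrow> transpose A = A"

definition pos_semidef :: "real^'n^'n \<Rightarrow> bool" where
  "pos_semidef A \<longleftrightarrow> (\<forall>x. 0 \<le> x \<bullet> (A *v x))"

definition neg_semidef :: "real^'n^'n \<Rightarrow> bool" where
  "neg_semidef A \<longleftrightarrow> (\<forall>x. x \<bullet> (A *v x) \<le> 0)"

definition is_eigenvector :: "real^'n^'n \<Rightarrow> real^'n \<Rightarrow> bool" where
  "is_eigenvector A v \<longleftrightarrow> v \<noteq> 0 \<and> (\<exists>\<xi>. A *v v = \<xi> *\<^sub>R v)"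

definition mat_spectrum :: "real^'n^'n \<Rightarrow> real set" where
  "mat_spectrum A = {\<xi>. \<exists>v. v \<noteq> 0 \<and> A *v v = \<xi> *\<^sub>R v}"

definition eigenspace :: "real^'n^'n \<Rightarrow> real \<Rightarrow> (real^'n) set" where
  "eigenspace A \<xi> = {v. A *v v = \<xi> *\<^sub>R v}"

text \<open>The (internal, necessarily direct) sum of the eigenspaces of F for negative
  eigenvalues is the span of their union.\<close>

definition eigencomplementary :: "real^'n^'n \<Rightarrow> real^'n^'n \<Rightarrow> bool" where
  "eigencomplementary F G \<longleftrightarrow>
     sym_mat F \<and> sym_mat G \<and> neg_semidef F \<and> pos_semidef G \<and>
     (\<exists>B. independent B \<and> span B = UNIV \<and>
          (\<forall>v\<in>B. is_eigenvector F v \<and> is_eigenvector G v)) \<and>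
     ((\<not> invertible F \<and> \<not> invertible G) \<longrightarrow>
        span (\<Union>\<xi>\<in>{\<xi>\<in>mat_spectrum F. \<xi> < 0}. eigenspace F \<xi>) = eigenspace G 0)"

end

theory Submission
  imports Defs
begin

lemma sym_inner:
  fixes M :: "real^'n^'n"
  assumes "transpose M = M"
  shows "(M *v x) \<bullet> y = x \<bullet> (M *v y)"
proof -
  have "x \<bullet> (M *v y) = (x v* M) \<bullet> y" by (simp add: dot_lmul_matrix)
  also have "x v* M = transpose M *v x" by simp
  finally show ?thesis using assms by simp
qed

lemma key:
  fixes M :: "real^'n^'n"
  assumes sym: "transpose M = M" and fin: "finite S"
    and ev: "\<And>m. m \<in> S \<Longrightarrow> M *v y m = m *\<^sub>R y m \<and> m \<le> 0"
  shows "(\<Sum>m\<in>S. y m) \<bullet> (M *v (\<Sum>m\<in>S. y m)) \<le> 0"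
proof -
  have orth: "y m \<bullet> y k = 0" if "m \<in> S" "k \<in> S" "m \<noteq> k" for m k
  proof -
    have "(M *v y m) \<bullet> y k = y m \<bullet> (M *v y k)" by (rule sym_inner[OF sym])
    then have "m * (y m \<bullet> y k) = k * (y m \<bullet> y k)" using ev[OF that(1)] ev[OF that(2)] by simp
    then show ?thesis using that(3) by simp
  qed
  have "M *v (\<Sum>m\<in>S. y m) = (\<Sum>m\<in>S. m *\<^sub>R y m)" using ev by (simp add: vec.sum)
  then have "(\<Sum>m\<in>S. y m) \<bullet> (M *v (\<Sum>m\<in>S. y m)) = (\<Sum>k\<in>S. \<Sum>m\<in>S. k * (y m \<bullet> y k))"
    by (simp add: inner_sum_left inner_sum_right sum_distrib_left)
  also have "\<dots> = (\<Sum>k\<in>S. \<Sum>m\<in>S. if k = m then k * (y k \<bullet> y k) else 0)"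
    by (intro sum.cong refl) (auto simp: orth)
  also have "\<dots> = (\<Sum>k\<in>S. k * (y k \<bullet> y k))" using fin by simp
  also have "\<dots> \<le> 0" using ev by (intro sum_nonpos mult_nonpos_nonneg) auto
  finally show ?thesis .
qed

lemma nsd_from_basis:
  fixes M :: "real^'n^'n"
  assumes sym: "transpose M = M" and sp: "span B = UNIV"
    and ev: "\<And>v. v \<in> B \<Longrightarrow> \<exists>m. m \<le> 0 \<and> M *v v = m *\<^sub>R v"
  shows "neg_semidef M"
  unfolding neg_semidef_def
proof
  fix x :: "real^'n"
  have "x \<in> span B" using sp by simp
  then obtain t r where t: "finite t" "t \<subseteq> B" and x: "x = (\<Sum>a\<in>t. r a *\<^sub>R a)"
    unfolding span_explicit by blast
  define mu where "mu v = (SOME m. m \<le> 0 \<and> M *v v = m *\<^sub>R v)" for v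
  have mu: "mu v \<le> 0 \<and> M *v v = mu v *\<^sub>R v" if "v \<in> B" for v
    unfolding mu_def by (rule someI_ex[OF ev[OF that]])
  define y where "y m = (\<Sum>a\<in>{a\<in>t. mu a = m}. r a *\<^sub>R a)" for m
  have xs: "x = (\<Sum>m\<in>mu ` t. y m)" unfolding x y_def by (rule sum.image_gen[OF t(1)])
  have "M *v y m = m *\<^sub>R y m \<and> m \<le> 0" if "m \<in> mu ` t" for m
  proof
    have "M *v y m = (\<Sum>a\<in>{a\<in>t. mu a = m}. r a *\<^sub>R (M *v a))"
      unfolding y_def by (simp add: vec.sum matrix_vector_mult_scaleR)
    also have "\<dots> = (\<Sum>a\<in>{a\<in>t. mu a = m}. m *\<^sub>R (r a *\<^sub>R a))"
      by (intro sum.cong refl) (use mu t in auto)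
    also have "\<dots> = m *\<^sub>R y m" unfolding y_def by (simp add: scaleR_sum_right)
    finally show "M *v y m = m *\<^sub>R y m" .
    show "m \<le> 0" using that mu t by auto
  qed
  then show "x \<bullet> (M *v x) \<le> 0" unfolding xs using t(1)
    by (intro key[OF sym]) auto
qed

lemma inv_props:
  fixes A :: "real^'n^'n"
  assumes "invertible A"
  shows "A ** matrix_inv A = mat 1 \<and> matrix_inv A ** A = mat 1"
  using assms unfolding invertible_def matrix_inv_def by (rule someI_ex)

lemma inv_sym:
  fixes A :: "real^'n^'n"
  assumes "invertible A" "transpose A = A"
  shows "transpose (matrix_inv A) = matrix_inv A"
proof -
  let ?X = "transpose (matrix_inv A)"
  have "?X ** A = mat 1"
    using inv_props[OF assms(1)] assms(2) by (metis matrix_transpose_mul transpose_mat)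
  then have "?X = ?X ** (A ** matrix_inv A)" using inv_props[OF assms(1)] by simp
  also have "\<dots> = matrix_inv A" using \<open>?X ** A = mat 1\<close> by (simp add: matrix_mul_assoc)
  finally show ?thesis .
qed

lemma comm_inv:
  fixes A C :: "real^'n^'n"
  assumes "invertible A" "A ** C = C ** A"
  shows "matrix_inv A ** C = C ** matrix_inv A"
proof -
  have i: "A ** matrix_inv A = mat 1" "matrix_inv A ** A = mat 1" using inv_props[OF assms(1)] by auto
  have "matrix_inv A ** C = matrix_inv A ** C ** (A ** matrix_inv A)" using i by simp
  also have "\<dots> = matrix_inv A ** (A ** C) ** matrix_inv A" using assms(2) by (simp add: matrix_mul_assoc)
  also have "\<dots> = C ** matrix_inv A" using i by (simp add: matrix_mul_assoc)
  finally show ?thesis .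
qed

theorem lemma2p5:
  fixes F G :: "real^'n^'n"
  assumes "eigencomplementary F G"
  shows "(invertible F \<longrightarrow> neg_semidef (matrix_inv F ** G)) \<and>
         (invertible G \<longrightarrow> neg_semidef (F ** matrix_inv G))"
proof -
  from assms have sF: "transpose F = F" and sG: "transpose G = G" and nF: "neg_semidef F"
    and pG: "pos_semidef G"
    unfolding eigencomplementary_def sym_mat_def by auto
  from assms obtain B where sp: "span B = UNIV"
    and evB: "\<forall>v\<in>B. is_eigenvector F v \<and> is_eigenvector G v"
    unfolding eigencomplementary_def by auto
  have ab: "\<exists>a b. a \<le> 0 \<and> 0 \<le> b \<and> F *v v = a *\<^sub>R v \<and> G *v v = b *\<^sub>R v \<and> v \<noteq> 0"
    if "v \<in> B" for v
  proof -
    have e: "is_eigenvector F v" "is_eigenvector G v" using evB that by auto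
    obtain a where "F *v v = a *\<^sub>R v" using e(1) unfolding is_eigenvector_def by blast
    moreover obtain b where "G *v v = b *\<^sub>R v" using e(2) unfolding is_eigenvector_def by blast
    moreover have "v \<noteq> 0" using e(1) unfolding is_eigenvector_def by blast
    ultimately have v: "v \<noteq> 0" "F *v v = a *\<^sub>R v" "G *v v = b *\<^sub>R v" by auto
    have vv: "0 < v \<bullet> v" using v(1) by simp
    have "v \<bullet> (F *v v) \<le> 0" using nF unfolding neg_semidef_def by blast
    then have "a * (v \<bullet> v) \<le> 0" using v by simp
    then have "a \<le> 0" using vv by (simp add: mult_le_0_iff)
    moreover have "0 \<le> v \<bullet> (G *v v)" using pG unfolding pos_semidef_def by blast
    then have "0 \<le> b * (v \<bullet> v)" using v by simp
    then have "0 \<le> b" using vv by (simp add: zero_le_mult_iff)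
    ultimately show ?thesis using v by blast
  qed
  have eqB: "(F ** G) *v v = (G ** F) *v v" if vB: "v \<in> B" for v
  proof -
    obtain a b where "F *v v = a *\<^sub>R v" "G *v v = b *\<^sub>R v" using ab[OF vB] by blast
    then show ?thesis
      by (simp add: matrix_vector_mul_assoc[symmetric] matrix_vector_mult_scaleR)
  qed
  have comm: "F ** G = G ** F"
    unfolding matrix_eq
  proof
    fix x :: "real^'n"
    have "x \<in> span B" using sp by simp
    then show "(F ** G) *v x = (G ** F) *v x"
      using linear_eq_on_span[OF matrix_vector_mul_linear matrix_vector_mul_linear, of B "F ** G" "G ** F"] eqB by blast
  qed
  have part1: "neg_semidef (matrix_inv F ** G)" if iF: "invertible F"
  proof (rule nsd_from_basis[OF _ sp])
    show "transpose (matrix_inv F ** G) = matrix_inv F ** G"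
      using inv_sym[OF iF sF] comm_inv[OF iF comm] sG by (simp add: matrix_transpose_mul)
    fix v assume "v \<in> B"
    then obtain a b where ab: "a \<le> 0" "0 \<le> b" "F *v v = a *\<^sub>R v" "G *v v = b *\<^sub>R v" "v \<noteq> 0"
      using ab by blast
    have i: "matrix_inv F ** F = mat 1" using inv_props[OF iF] by auto
    have "a \<noteq> 0"
    proof
      assume "a = 0"
      then have "matrix_inv F *v (F *v v) = 0" using ab by simp
      then show False using i ab(5) by (simp add: matrix_vector_mul_assoc)
    qed
    have "v = matrix_inv F *v (F *v v)" using i by (simp add: matrix_vector_mul_assoc)
    also have "\<dots> = a *\<^sub>R (matrix_inv F *v v)" using ab by (simp add: matrix_vector_mult_scaleR)
    finally have "(1/a) *\<^sub>R v = (1/a) *\<^sub>R (a *\<^sub>R (matrix_inv F *v v))" by simp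
    then have Fi: "matrix_inv F *v v = (1/a) *\<^sub>R v" using \<open>a \<noteq> 0\<close> by simp
    have "(matrix_inv F ** G) *v v = (b/a) *\<^sub>R v"
      using Fi ab by (simp add: matrix_vector_mul_assoc[symmetric] matrix_vector_mult_scaleR)
    moreover have "b / a \<le> 0" using ab by (simp add: divide_nonneg_nonpos)
    ultimately show "\<exists>m. m \<le> 0 \<and> (matrix_inv F ** G) *v v = m *\<^sub>R v" by blast
  qed
  have part2: "neg_semidef (F ** matrix_inv G)" if iG: "invertible G"
  proof (rule nsd_from_basis[OF _ sp])
    show "transpose (F ** matrix_inv G) = F ** matrix_inv G"
      using inv_sym[OF iG sG] comm_inv[OF iG comm[symmetric]] sF by (simp add: matrix_transpose_mul)
    fix v assume "v \<in> B"
    then obtain a b where ab: "a \<le> 0" "0 \<le> b" "F *v v = a *\<^sub>R v" "G *v v = b *\<^sub>R v" "v \<noteq> 0"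
      using ab by blast
    have i: "matrix_inv G ** G = mat 1" using inv_props[OF iG] by auto
    have "b \<noteq> 0"
    proof
      assume "b = 0"
      then have "matrix_inv G *v (G *v v) = 0" using ab by simp
      then show False using i ab(5) by (simp add: matrix_vector_mul_assoc)
    qed
    have "v = matrix_inv G *v (G *v v)" using i by (simp add: matrix_vector_mul_assoc)
    also have "\<dots> = b *\<^sub>R (matrix_inv G *v v)" using ab by (simp add: matrix_vector_mult_scaleR)
    finally have "(1/b) *\<^sub>R v = (1/b) *\<^sub>R (b *\<^sub>R (matrix_inv G *v v))" by simp
    then have Gi: "matrix_inv G *v v = (1/b) *\<^sub>R v" using \<open>b \<noteq> 0\<close> by simp
    have "(F ** matrix_inv G) *v v = (a/b) *\<^sub>R v"
      using Gi ab by (simp add: matrix_vector_mul_assoc[symmetric] matrix_vector_mult_scaleR)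
    moreover have "a / b \<le> 0" using ab by (simp add: divide_nonpos_nonneg)
    ultimately show "\<exists>m. m \<le> 0 \<and> (F ** matrix_inv G) *v v = m *\<^sub>R v" by blast
  qed
  show ?thesis using part1 part2 by blast
qed

end
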